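(* Let $\alpha>0$ and $f\in BV_\alpha(\mathbb{R}^d)$. For every compact set $\mathcal{K}\subset\mathbb{R}^d$, $$\|f\|_{L^\infty(\psi,\mathcal{K})}\le\frac{\max\big(\|\psi'\|_{L^\infty(\mathbb{R}^d)},1\big)}{d_{\mathcal{K}}}\,\|f\|_{BV_\alpha},$$ where $d_{\mathcal{K}}:=\operatorname{ess\,inf}_{x\in\mathcal{K}}\psi(B_1(x))>0$.
   Context: Let $\rho_\alpha(x)=(1+|x|^2)^{\alpha/2}$ and $\|f\|_{L^1_\alpha}:=\int\rho_\alpha|f|\,dx$. Let $\psi$ be a Radon probability measure on $\mathbb{R}^d$ absolutely continuous with respect to Lebesgue measure, with continuous bounded density $\psi'>0$ everywhere. For Borel $S$, $\operatorname{osc}(f,S):=\operatorname{ess\,sup}_S f-\operatorname{ess\,inf}_S f$. $\|f\|_{BV_\alpha}:=\|f\|_{L^1_\alpha}+\sup_{\epsilon\in(0,1]}\epsilon^{-1}\int\operatorname{osc}(f,B_\epsilon(x))\,d\psi(x)$, and $BV_\alpha$ is the space of functions with finite such norm. $\|f\|_{L^\infty(\psi,\mathcal{K})}$ is the essential supremum of $|f|$ on $\mathcal{K}$ with respect to $\psi$; $B_1(x)$ is the closed/open unit ball centered at $x$. *)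

theory Defs
  imports "HOL-Probability.Probability"
begin

definition rho :: "real \<Rightarrow> 'a::euclidean_space \<Rightarrow> real" where
  "rho \<alpha> x = (1 + (norm x)\<^sup>2) powr (\<alpha> / 2)"

definition essinf :: "'a measure \<Rightarrow> ('a \<Rightarrow> ereal) \<Rightarrow> ereal" where
  "essinf M f = - esssup M (\<lambda>x. - f x)"

definition osc :: "('a::euclidean_space \<Rightarrow> real) \<Rightarrow> 'a set \<Rightarrow> ereal" where
  "osc f S = esssup (restrict_space lborel S) (\<lambda>x. ereal (f x))
             - essinf (restrict_space lborel S) (\<lambda>x. ereal (f x))"

definition L1_alpha_norm :: "real \<Rightarrow> ('a::euclidean_space \<Rightarrow> real) \<Rightarrow> ennreal" where
  "L1_alpha_norm \<alpha> f = (\<integral>\<^sup>+ x. ennreal (rho \<alpha> x * \<bar>f x\<bar>) \<partial>lborel)"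

definition BV_alpha_norm ::
  "real \<Rightarrow> 'a::euclidean_space measure \<Rightarrow> ('a \<Rightarrow> real) \<Rightarrow> ennreal" where
  "BV_alpha_norm \<alpha> \<psi> f = L1_alpha_norm \<alpha> f
     + (SUP \<epsilon>\<in>{0<..1::real}. ennreal (1 / \<epsilon>) *
          (\<integral>\<^sup>+ x. e2ennreal (osc f (ball x \<epsilon>)) \<partial>\<psi>))"

end

theory Submission imports Defs begin

lemma esssup_restrict_mono:
  fixes u :: "'a::euclidean_space \<Rightarrow> ereal"
  assumes u: "u \<in> borel_measurable lborel" and A: "A \<in> sets lborel" and B: "B \<in> sets lborel"
    and AB: "A \<subseteq> B"
  shows "esssup (restrict_space lborel A) u \<le> esssup (restrict_space lborel B) u"
proof (rule esssup_I)
  show "u \<in> borel_measurable (restrict_space lborel A)"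
    using u by (simp add: measurable_restrict_space1)
  have "AE x in restrict_space lborel B. u x \<le> esssup (restrict_space lborel B) u"
    by (rule esssup_AE)
  then have "AE x in lborel. x \<in> B \<longrightarrow> u x \<le> esssup (restrict_space lborel B) u"
    using B by (subst (asm) AE_restrict_space_iff) auto
  then have "AE x in lborel. x \<in> A \<longrightarrow> u x \<le> esssup (restrict_space lborel B) u"
    using AB by (auto elim: eventually_mono)
  then show "AE x in restrict_space lborel A. u x \<le> esssup (restrict_space lborel B) u"
    using A by (subst AE_restrict_space_iff) auto
qed

lemma good_sup:
  fixes u :: "'a::euclidean_space \<Rightarrow> ereal"
  assumes u: "u \<in> borel_measurable lborel"
  shows "AE x in lborel. \<forall>y r. x \<in> ball y r \<longrightarrow> u x \<le> esssup (restrict_space lborel (ball y r)) u"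
proof -
  obtain BB :: "'a set set" where cB: "countable BB" and tB: "topological_basis BB"
    using ex_countable_basis by blast
  have "\<forall>b\<in>BB. AE x in lborel. x \<in> b \<longrightarrow> u x \<le> esssup (restrict_space lborel b) u"
  proof
    fix b assume "b \<in> BB"
    then have "open b" using tB topological_basis_open by blast
    then have bm: "b \<in> sets lborel" by simp
    have "AE x in restrict_space lborel b. u x \<le> esssup (restrict_space lborel b) u"
      by (rule esssup_AE)
    then show "AE x in lborel. x \<in> b \<longrightarrow> u x \<le> esssup (restrict_space lborel b) u"
      using bm by (subst (asm) AE_restrict_space_iff) auto
  qed
  then have "AE x in lborel. \<forall>b\<in>BB. x \<in> b \<longrightarrow> u x \<le> esssup (restrict_space lborel b) u"
    using cB by (subst AE_ball_countable) auto
  then show ?thesis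
  proof (rule eventually_mono, intro allI impI)
    fix x y r
    assume H: "\<forall>b\<in>BB. x \<in> b \<longrightarrow> u x \<le> esssup (restrict_space lborel b) u" and xb: "x \<in> ball y r"
    obtain b where b: "b \<in> BB" "x \<in> b" "b \<subseteq> ball y r"
      using topological_basisE[OF tB open_ball xb] by blast
    then have "open b" using tB topological_basis_open by blast
    have "u x \<le> esssup (restrict_space lborel b) u" using H b by blast
    also have "\<dots> \<le> esssup (restrict_space lborel (ball y r)) u"
      using esssup_restrict_mono[OF u _ _ b(3)] \<open>open b\<close> by simp
    finally show "u x \<le> esssup (restrict_space lborel (ball y r)) u" .
  qed
qed

lemma good_both:
  fixes f :: "'a::euclidean_space \<Rightarrow> real"
  assumes f: "f \<in> borel_measurable lborel"
  shows "AE x in lborel. \<forall>y r. x \<in> ball y r \<longrightarrow>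
     essinf (restrict_space lborel (ball y r)) (\<lambda>x. ereal (f x)) \<le> ereal (f x) \<and>
     ereal (f x) \<le> esssup (restrict_space lborel (ball y r)) (\<lambda>x. ereal (f x))"
proof -
  have 1: "AE x in lborel. \<forall>y r. x \<in> ball y r \<longrightarrow> ereal (f x) \<le> esssup (restrict_space lborel (ball y r)) (\<lambda>x. ereal (f x))"
    by (rule good_sup) (use f in simp)
  have 2: "AE x in lborel. \<forall>y r. x \<in> ball y r \<longrightarrow> - ereal (f x) \<le> esssup (restrict_space lborel (ball y r)) (\<lambda>x. - ereal (f x))"
    by (rule good_sup) (use f in simp)
  show ?thesis using 1 2
    by eventually_elim (auto simp: essinf_def ereal_uminus_le_reorder)
qed


lemma pointwise_ineq:
  fixes a b :: real and S I :: ereal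
  assumes "I \<le> ereal a" "ereal a \<le> S" "I \<le> ereal b" "ereal b \<le> S"
  shows "ennreal \<bar>a\<bar> \<le> ennreal \<bar>b\<bar> + e2ennreal (S - I)"
proof (cases S)
  case (real s)
  show ?thesis
  proof (cases I)
    case (real i)
    then have "\<bar>a\<bar> \<le> \<bar>b\<bar> + (s - i)" "s - i \<ge> 0" using assms \<open>S = ereal s\<close> by auto
    then show ?thesis using \<open>S = ereal s\<close> real
      by (simp add: e2ennreal_ereal ennreal_plus[symmetric] del: ennreal_plus)
  next
    case PInf then show ?thesis using assms by auto
  next
    case MInf then show ?thesis using real by simp
  qed
next
  case PInf
  then have "S - I = \<infinity>" using assms by (cases I) auto
  then show ?thesis by simp
next
  case MInf then show ?thesis using assms by auto
qed

lemma ball_measure_meas: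
  fixes g :: "'a::euclidean_space \<Rightarrow> real"
  assumes g: "g \<in> borel_measurable lborel"
  shows "(\<lambda>x. emeasure (density lborel (\<lambda>x. ennreal (g x))) (ball x 1)) \<in> borel_measurable lborel"
proof -
  have eq: "(\<lambda>x. emeasure (density lborel (\<lambda>x. ennreal (g x))) (ball x 1))
     = (\<lambda>x. \<integral>\<^sup>+ y. ennreal (g y) * indicator {p::'a\<times>'a. dist (fst p) (snd p) < 1} (x, y) \<partial>lborel)"
    by (rule ext, subst emeasure_density) (use g in \<open>auto intro!: nn_integral_cong simp: indicator_def measurable_lborel1\<close>)
  have "(\<lambda>p::'a\<times>'a. ennreal (g (snd p)) * indicator {p::'a\<times>'a. dist (fst p) (snd p) < 1} p) \<in> borel_measurable (lborel \<Otimes>\<^sub>M lborel)"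
  proof -
    have o: "open {p::'a\<times>'a. dist (fst p) (snd p) < 1}"
      by (intro open_Collect_less continuous_intros)
    have "(\<lambda>p::'a\<times>'a. ennreal (g (snd p)) * indicator {p::'a\<times>'a. dist (fst p) (snd p) < 1} p) \<in> borel_measurable (lborel \<Otimes>\<^sub>M lborel)"
      using g o by measurable
    then show ?thesis .
  qed
  then show ?thesis unfolding eq
    by (intro lborel.borel_measurable_nn_integral) (simp add: case_prod_beta')
qed


lemma ennreal_le_add_diff: "(c::ennreal) \<le> a + (c - a)"
proof (cases "a \<le> c")
  case True then show ?thesis using ennreal_ineq_diff_add by simp
next
  case False then show ?thesis by (meson add_increasing2 linear zero_le)
qed

theorem proposition17:
  fixes \<alpha> :: real and g :: "'a::euclidean_space \<Rightarrow> real"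
    and f :: "'a \<Rightarrow> real" and K :: "'a set"
  defines "\<psi> \<equiv> density lborel (\<lambda>x. ennreal (g x))"
  assumes g_cont: "continuous_on UNIV g"
    and g_bdd: "bounded (range g)"
    and g_pos: "\<And>x. g x > 0"
    and g_prob: "(\<integral>\<^sup>+ x. ennreal (g x) \<partial>lborel) = 1"
    and \<alpha>_pos: "\<alpha> > 0"
    and f_meas: "f \<in> borel_measurable lborel"
    and f_BV: "BV_alpha_norm \<alpha> \<psi> f < \<top>"
    and K_compact: "compact K"
  shows "essinf (restrict_space \<psi> K) (\<lambda>x. ereal (measure \<psi> (ball x 1))) > 0
    \<and> esssup (restrict_space \<psi> K) (\<lambda>x. ereal \<bar>f x\<bar>)
      \<le> max (esssup lborel (\<lambda>x. ereal (g x))) 1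
          / essinf (restrict_space \<psi> K) (\<lambda>x. ereal (measure \<psi> (ball x 1)))
          * enn2ereal (BV_alpha_norm \<alpha> \<psi> f)"
proof -
  have gm: "g \<in> borel_measurable lborel"
    using borel_measurable_continuous_onI[OF g_cont] by (simp add: measurable_lborel1)
  have sets_psi: "sets \<psi> = sets lborel" by (simp add: \<psi>_def)
  have space_psi: "space \<psi> = UNIV" by (simp add: \<psi>_def)
  have meas_psi: "u \<in> borel_measurable \<psi>" if "u \<in> borel_measurable lborel" for u :: "'a \<Rightarrow> 'b::topological_space"
    using that measurable_cong_sets[OF sets_psi refl] by blast
  have "emeasure \<psi> (space \<psi>) = 1"
    unfolding \<psi>_def using gm g_prob by (simp add: emeasure_density)
  then interpret psi: finite_measure \<psi> by (intro finite_measureI) simp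
  have Ksets: "K \<in> sets \<psi>" using sets_psi compact_imp_closed[OF K_compact] by simp
  define d where "d = essinf (restrict_space \<psi> K) (\<lambda>x. ereal (measure \<psi> (ball x 1)))"
  have hm: "(\<lambda>x. ereal (measure \<psi> (ball x 1))) \<in> borel_measurable \<psi>"
  proof -
    have "(\<lambda>x. emeasure \<psi> (ball x 1)) \<in> borel_measurable lborel"
      unfolding \<psi>_def by (rule ball_measure_meas[OF gm])
    then have "(\<lambda>x. ereal (enn2real (emeasure \<psi> (ball x 1)))) \<in> borel_measurable lborel"
      by measurable
    then show ?thesis by (intro meas_psi) (simp add: measure_def)
  qed
  have hmK: "(\<lambda>x. - ereal (measure \<psi> (ball x 1))) \<in> borel_measurable (restrict_space \<psi> K)"
    using hm by (intro measurable_restrict_space1) simp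
  obtain c where c_pos: "c > 0" and c_le: "\<And>x. x \<in> K \<Longrightarrow> c \<le> measure \<psi> (ball x 1)"
  proof -
    obtain R where R: "R > 0" "K \<subseteq> cball 0 R"
      using compact_imp_bounded[OF K_compact] unfolding bounded_pos by (auto simp: subset_iff)
    obtain z where z: "z \<in> cball 0 (R+1)" and zmin: "\<And>y. y \<in> cball 0 (R+1) \<Longrightarrow> g z \<le> g y"
    proof -
      have ne: "cball (0::'a) (R+1) \<noteq> {}" using R by simp
      show ?thesis
        using continuous_attains_inf[OF compact_cball ne continuous_on_subset[OF g_cont subset_UNIV]] that
        by blast
    qed
    define V where "V = unit_ball_vol (real DIM('a))"
    have Vpos: "V > 0" unfolding V_def by simp
    show ?thesis
    proof
      show "g z * V > 0" using g_pos Vpos by simp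
    next
      fix x assume xK: "x \<in> K"
      have "ennreal (g z * V) = (\<integral>\<^sup>+ y. ennreal (g z) * indicator (ball x 1) y \<partial>lborel)"
        by (simp add: nn_integral_cmult_indicator emeasure_ball V_def ennreal_mult g_pos less_imp_le)
      also have "\<dots> \<le> (\<integral>\<^sup>+ y. ennreal (g y) * indicator (ball x 1) y \<partial>lborel)"
      proof (intro nn_integral_mono)
        fix y
        show "ennreal (g z) * indicator (ball x 1) y \<le> ennreal (g y) * indicator (ball x 1) y"
        proof (cases "y \<in> ball x 1")
          case True
          have "norm x \<le> R" using xK R(2) by auto
          moreover have "norm (y - x) < 1" using True by (simp add: dist_norm norm_minus_commute)
          moreover have "norm y \<le> norm x + norm (y - x)" using norm_triangle_ineq[of x "y - x"] by simp
          ultimately have "norm y \<le> R + 1" by linarith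
          then show ?thesis using True zmin[of y] by (simp add: ennreal_leI)
        qed simp
      qed
      also have "\<dots> = emeasure \<psi> (ball x 1)"
        unfolding \<psi>_def using gm by (simp add: emeasure_density measurable_lborel1)
      also have "\<dots> = ennreal (measure \<psi> (ball x 1))" by (rule psi.emeasure_eq_measure)
      finally show "g z * V \<le> measure \<psi> (ball x 1)"
        using mult_pos_pos[OF g_pos[of z] Vpos] by (auto simp: ennreal_le_iff2)
    qed
  qed
  have d_ge: "ereal c \<le> d"
  proof -
    have "esssup (restrict_space \<psi> K) (\<lambda>x. - ereal (measure \<psi> (ball x 1))) \<le> - ereal c"
      using c_le by (intro esssup_I[OF hmK] AE_I2) (simp add: space_restrict_space space_psi)
    then show ?thesis unfolding d_def essinf_def by (metis ereal_minus_le_minus ereal_uminus_uminus)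
  qed
  have d_pos: "d > 0" using d_ge c_pos by (meson ereal_less(2) less_le_trans)
  define E where "E = esssup lborel (\<lambda>x. ereal (g x))"
  define m where "m = max (real_of_ereal E) 1"
  obtain B where B: "\<And>x. \<bar>g x\<bar> \<le> B"
    using g_bdd unfolding bounded_iff by auto
  have "E \<le> ereal B"
    unfolding E_def using B gm by (intro esssup_I AE_I2) (auto simp: abs_le_iff)
  then have Em: "max E 1 = ereal m" unfolding m_def by (cases E) (auto simp: one_ereal_def max_def)
  have m1: "m \<ge> 1" unfolding m_def by simp
  have g_le_m: "AE y in lborel. g y \<le> m"
  proof -
    have "AE y in lborel. ereal (g y) \<le> E" unfolding E_def by (rule esssup_AE)
    then show ?thesis
    proof (rule eventually_mono)
      fix y assume "ereal (g y) \<le> E"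
      then have "ereal (g y) \<le> max E 1" by (simp add: le_max_iff_disj)
      then show "g y \<le> m" using Em by simp
    qed
  qed
  obtain bv where bv: "bv \<ge> 0" "BV_alpha_norm \<alpha> \<psi> f = ennreal bv"
    using f_BV by (cases "BV_alpha_norm \<alpha> \<psi> f" rule: ennreal_cases) auto
  define G where "G x \<longleftrightarrow> (\<forall>y r. x \<in> ball y r \<longrightarrow>
     essinf (restrict_space lborel (ball y r)) (\<lambda>x. ereal (f x)) \<le> ereal (f x) \<and>
     ereal (f x) \<le> esssup (restrict_space lborel (ball y r)) (\<lambda>x. ereal (f x)))" for x
  have G_psi: "AE x in \<psi>. G x"
  proof -
    have "AE x in lborel. G x" unfolding G_def by (rule good_both[OF f_meas])
    then show ?thesis unfolding \<psi>_def using gm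
      by (subst AE_density) (auto simp: measurable_lborel1 elim: eventually_mono)
  qed
  have key: "ennreal \<bar>f x\<bar> * emeasure \<psi> (ball x 1) \<le> ennreal m * ennreal bv" if Gx: "G x" for x
  proof -
    define c where "c y = ennreal \<bar>f x\<bar> * indicator (ball x 1) y" for y
    define a where "a y = ennreal \<bar>f y\<bar>" for y
    define b where "b y = e2ennreal (osc f (ball y 1))" for y
    have am: "a \<in> borel_measurable lborel" unfolding a_def using f_meas by measurable
    have cm: "c \<in> borel_measurable lborel" unfolding c_def by (intro borel_measurable_times_ennreal borel_measurable_indicator) auto
    have cab: "AE y in \<psi>. c y \<le> a y + b y"
      using G_psi
    proof eventually_elim
      case (elim y)
      show ?case
      proof (cases "y \<in> ball x 1")
        case True
        then have xy: "x \<in> ball y 1" by (simp add: dist_commute)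
        have yy: "y \<in> ball y 1" by simp
        show ?thesis
          using pointwise_ineq[of "essinf (restrict_space lborel (ball y 1)) (\<lambda>x. ereal (f x))" "f x"
             "esssup (restrict_space lborel (ball y 1)) (\<lambda>x. ereal (f x))" "f y"]
            Gx[unfolded G_def, rule_format, OF xy] elim[unfolded G_def, rule_format, OF yy] True
          by (simp add: c_def a_def b_def osc_def)
      qed (simp add: c_def)
    qed
    define SS where "SS = (SUP \<epsilon>\<in>{0<..1::real}. ennreal (1 / \<epsilon>) *
          (\<integral>\<^sup>+ x. e2ennreal (osc f (ball x \<epsilon>)) \<partial>\<psi>))"
    have "ennreal \<bar>f x\<bar> * emeasure \<psi> (ball x 1) = (\<integral>\<^sup>+ y. c y \<partial>\<psi>)"
      unfolding c_def using sets_psi by (simp add: nn_integral_cmult_indicator)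
    also have "\<dots> \<le> (\<integral>\<^sup>+ y. a y + (c y - a y) \<partial>\<psi>)"
      by (intro nn_integral_mono ennreal_le_add_diff)
    also have "\<dots> = (\<integral>\<^sup>+ y. a y \<partial>\<psi>) + (\<integral>\<^sup>+ y. (c y - a y) \<partial>\<psi>)"
      using am cm by (intro nn_integral_add meas_psi borel_measurable_diff) (auto simp: measurable_lborel1)
    finally have s1: "ennreal \<bar>f x\<bar> * emeasure \<psi> (ball x 1) \<le> (\<integral>\<^sup>+ y. a y \<partial>\<psi>) + (\<integral>\<^sup>+ y. (c y - a y) \<partial>\<psi>)" .
    have "(\<integral>\<^sup>+ y. (c y - a y) \<partial>\<psi>) \<le> (\<integral>\<^sup>+ y. b y \<partial>\<psi>)"
      using cab
    proof (intro nn_integral_mono_AE, eventually_elim)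
      case (elim y)
      have "c y \<noteq> top" by (simp add: c_def indicator_def)
      then show ?case using elim by (simp add: ennreal_minus_le_iff)
    qed
    also have "(\<integral>\<^sup>+ y. b y \<partial>\<psi>) \<le> SS"
      unfolding SS_def by (rule SUP_upper2[of 1]) (simp_all add: b_def)
    finally have s2: "(\<integral>\<^sup>+ y. (c y - a y) \<partial>\<psi>) \<le> SS" .
    have "(\<integral>\<^sup>+ y. a y \<partial>\<psi>) = (\<integral>\<^sup>+ y. ennreal (g y) * a y \<partial>lborel)"
      unfolding \<psi>_def using gm am by (subst nn_integral_density) (auto simp: measurable_lborel1)
    also have "\<dots> \<le> (\<integral>\<^sup>+ y. ennreal m * a y \<partial>lborel)"
      using g_le_m by (intro nn_integral_mono_AE) (auto elim!: eventually_mono intro!: mult_right_mono ennreal_leI)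
    also have "\<dots> = ennreal m * (\<integral>\<^sup>+ y. a y \<partial>lborel)"
      using am by (rule nn_integral_cmult)
    also have "\<dots> \<le> ennreal m * L1_alpha_norm \<alpha> f"
    proof (intro mult_left_mono)
      show "(\<integral>\<^sup>+ y. a y \<partial>lborel) \<le> L1_alpha_norm \<alpha> f"
        unfolding L1_alpha_norm_def a_def
      proof (intro nn_integral_mono ennreal_leI)
        fix y :: 'a
        have "1 \<le> rho \<alpha> y" unfolding rho_def using \<alpha>_pos by (intro ge_one_powr_ge_zero) auto
        then show "\<bar>f y\<bar> \<le> rho \<alpha> y * \<bar>f y\<bar>"
          by (metis abs_ge_zero mult_le_cancel_right1 not_le order_less_le_trans zero_less_one)
      qed
    qed simp
    finally have s3: "(\<integral>\<^sup>+ y. a y \<partial>\<psi>) \<le> ennreal m * L1_alpha_norm \<alpha> f" .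
    have "ennreal \<bar>f x\<bar> * emeasure \<psi> (ball x 1) \<le> ennreal m * L1_alpha_norm \<alpha> f + SS"
      using s1 s2 s3 by (meson add_mono order_trans)
    also have "\<dots> \<le> ennreal m * L1_alpha_norm \<alpha> f + ennreal m * SS"
    proof (intro add_left_mono)
      have "(1::ennreal) \<le> ennreal m" using m1 by simp
      then show "SS \<le> ennreal m * SS"
        by (metis mult_right_mono mult_1 zero_le)
    qed
    also have "\<dots> = ennreal m * BV_alpha_norm \<alpha> \<psi> f"
      unfolding BV_alpha_norm_def SS_def by (simp add: distrib_left)
    finally show ?thesis using bv by simp
  qed
  have main: "esssup (restrict_space \<psi> K) (\<lambda>x. ereal \<bar>f x\<bar>)
      \<le> ereal m / d * ereal bv"
  proof (rule dense_le)
    fix t assume t: "t < esssup (restrict_space \<psi> K) (\<lambda>x. ereal \<bar>f x\<bar>)"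
    have fK: "(\<lambda>x. ereal \<bar>f x\<bar>) \<in> borel_measurable (restrict_space \<psi> K)"
      using f_meas by (intro measurable_restrict_space1 meas_psi) (simp add: measurable_lborel1 borel_measurable_abs)
    have AEQ: "AE x in restrict_space \<psi> K. G x \<and> d \<le> ereal (measure \<psi> (ball x 1))"
    proof -
      have 1: "AE x in restrict_space \<psi> K. G x"
        using G_psi Ksets by (subst AE_restrict_space_iff) (auto simp: space_psi elim: eventually_mono)
      have "AE x in restrict_space \<psi> K. - ereal (measure \<psi> (ball x 1))
          \<le> esssup (restrict_space \<psi> K) (\<lambda>x. - ereal (measure \<psi> (ball x 1)))"
        by (rule esssup_AE)
      then have 2: "AE x in restrict_space \<psi> K. d \<le> ereal (measure \<psi> (ball x 1))"
        unfolding d_def essinf_def by (rule eventually_mono) (metis ereal_uminus_le_reorder)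
      show ?thesis using 1 2 by eventually_elim simp
    qed
    obtain x where xK: "x \<in> K" and Gx: "G x" and dx: "d \<le> ereal (measure \<psi> (ball x 1))"
      and tx: "t < ereal \<bar>f x\<bar>"
    proof (rule ccontr)
      assume "\<not> thesis"
      have inK: "AE x in restrict_space \<psi> K. x \<in> K"
        by (rule AE_I2) (simp add: space_restrict_space space_psi)
      have "AE x in restrict_space \<psi> K. ereal \<bar>f x\<bar> \<le> t"
        using AEQ inK
      proof eventually_elim
        case (elim x)
        then show ?case using that \<open>\<not> thesis\<close> by (meson not_less)
      qed
      then have "esssup (restrict_space \<psi> K) (\<lambda>x. ereal \<bar>f x\<bar>) \<le> t"
        by (rule esssup_I[OF fK])
      then show False using t by simp
    qed
    define hx where "hx = measure \<psi> (ball x 1)"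
    have "ennreal \<bar>f x\<bar> * ennreal hx \<le> ennreal m * ennreal bv"
      using key[OF Gx] psi.emeasure_eq_measure unfolding hx_def by simp
    then have fh: "\<bar>f x\<bar> * hx \<le> m * bv"
      using m1 bv(1) measure_nonneg[of \<psi> "ball x 1"] unfolding hx_def by (simp add: ennreal_mult[symmetric] ennreal_le_iff)
    obtain dr where dr: "d = ereal dr" using d_pos dx by (cases d) auto
    have dr_pos: "dr > 0" using d_pos dr by simp
    have drh: "dr \<le> hx" using dx dr hx_def by simp
    have rhs: "ereal m / d * ereal bv = ereal (m / dr * bv)"
      using dr dr_pos by (simp add: divide_ereal_def field_simps)
    have "0 \<le> m / dr * bv" using m1 dr_pos bv(1) by simp
    show "t \<le> ereal m / d * ereal bv"
    proof (cases t)
      case (real tr)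
      show ?thesis
      proof (cases "tr \<le> 0")
        case True then show ?thesis using rhs real \<open>0 \<le> m / dr * bv\<close> by simp
      next
        case False
        have "tr * dr \<le> \<bar>f x\<bar> * hx"
          using tx real False drh dr_pos by (intro mult_mono) auto
        then have "tr * dr \<le> m * bv" using fh by linarith
        then have "tr \<le> m / dr * bv" using dr_pos by (simp add: field_simps)
        then show ?thesis using rhs real by simp
      qed
    qed (use tx in auto)
  qed
  show ?thesis using d_pos main bv by (simp add: Em d_def[symmetric] E_def[symmetric])
qed

end
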